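(* Consider the weighted-median opinion dynamics on a row-stochastic influence matrix $W$ with node set $V=\{1,\dots,n\}$. Suppose there is a nonempty maximal cohesive set $M\ne V$. Then there exists a set $X_0\subseteq\mathbb R^n$ of positive Lebesgue measure with the following property: for every $x(0)\in X_0$ and every sequence of updating nodes, the solution never reaches a consensus state (a vector with all entries equal). One such set is $$X_0=\Big\{x\in\mathbb R^n:\ \max_{j\in M}x_j<\min_{k\in V\setminus M}x_k \ \text{ or }\ \min_{j\in M}x_j>\max_{k\in V\setminus M}x_k\Big\}.$$
   Context: A matrix $W=(w_{ij})_{n\times n}$ is row-stochastic if $w_{ij}\ge 0$ for all $i,j$ and $\sum_{j=1}^n w_{ij}=1$ for every $i$. A set $M\subseteq V$ is cohesive if $\sum_{j\in M} w_{ij}\ge 1/2$ for every $i\in M$. A cohesive set $M$ is maximal cohesive if there is no $i\in V\setminus M$ with $\sum_{j\in M} w_{ij}>1/2$. A weighted median of $x\in\mathbb R^n$ with respect to row $i$ of $W$ is any $y\in\{x_1,\dots,x_n\}$ satisfying $\sum_{j:\,x_j<y}w_{ij}\le 1/2$ and $\sum_{j:\,x_j>y}w_{ij}\le 1/2$. $\mathrm{Med}_i(x;W)$ denotes this weighted median when it is unique. When it is not unique, $\mathrm{Med}_i(x;W)$ denotes the weighted median closest to $x_i$, which is then uniquely determined. Weighted-median opinion dynamics: given $x(0)\in\mathbb R^n$, at each time step $t+1$ ($t=0,1,2,\dots$) an index $i$ is drawn uniformly at random from $\{1,\dots,n\}$, independently of the past. Then $x_i(t+1)=\mathrm{Med}_i(x(t);W)$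 and $x_j(t+1)=x_j(t)$ for $j\ne i$. *)

theory Defs
  imports "HOL-Analysis.Analysis"
begin

text \<open>Node set V = UNIV of a finite type 'n; influence matrix W :: 'n => 'n => real;
  opinion vectors x :: real^'n.\<close>

definition row_stochastic :: "('n::finite \<Rightarrow> 'n \<Rightarrow> real) \<Rightarrow> bool" where
  "row_stochastic W \<longleftrightarrow> (\<forall>i j. W i j \<ge> 0) \<and> (\<forall>i. (\<Sum>j\<in>UNIV. W i j) = 1)"

definition cohesive :: "('n::finite \<Rightarrow> 'n \<Rightarrow> real) \<Rightarrow> 'n set \<Rightarrow> bool" where
  "cohesive W M \<longleftrightarrow> (\<forall>i\<in>M. (\<Sum>j\<in>M. W i j) \<ge> 1/2)"

definition maximal_cohesive :: "('n::finite \<Rightarrow> 'n \<Rightarrow> real) \<Rightarrow> 'n set \<Rightarrow> bool" where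
  "maximal_cohesive W M \<longleftrightarrow> cohesive W M \<and> \<not> (\<exists>i\<in>UNIV - M. (\<Sum>j\<in>M. W i j) > 1/2)"

definition is_wmedian :: "('n::finite \<Rightarrow> 'n \<Rightarrow> real) \<Rightarrow> 'n \<Rightarrow> real^'n \<Rightarrow> real \<Rightarrow> bool" where
  "is_wmedian W i x y \<longleftrightarrow> y \<in> range (\<lambda>j. x $ j) \<and>
     (\<Sum>j\<in>{j. x $ j < y}. W i j) \<le> 1/2 \<and> (\<Sum>j\<in>{j. x $ j > y}. W i j) \<le> 1/2"

text \<open>Med_i(x;W): the weighted median closest to x_i (this is the unique weighted
  median when it is unique).\<close>
definition Med :: "('n::finite \<Rightarrow> 'n \<Rightarrow> real) \<Rightarrow> 'n \<Rightarrow> real^'n \<Rightarrow> real" where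
  "Med W i x = (THE y. is_wmedian W i x y \<and>
      (\<forall>z. is_wmedian W i x z \<longrightarrow> \<bar>y - x $ i\<bar> \<le> \<bar>z - x $ i\<bar>))"

primrec wm_traj :: "('n::finite \<Rightarrow> 'n \<Rightarrow> real) \<Rightarrow> real^'n \<Rightarrow> (nat \<Rightarrow> 'n) \<Rightarrow> nat \<Rightarrow> real^'n" where
  "wm_traj W x0 \<sigma> 0 = x0"
| "wm_traj W x0 \<sigma> (Suc t) =
     (let x = wm_traj W x0 \<sigma> t in (\<chi> k. if k = \<sigma> t then Med W (\<sigma> t) x else x $ k))"

definition consensus :: "real^'n \<Rightarrow> bool" where
  "consensus x \<longleftrightarrow> (\<forall>i j. x $ i = x $ j)"

end

theory Submission
  imports Defs
begin

lemma rs_nonneg: "row_stochastic W \<Longrightarrow> W i j \<ge> 0"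
  by (simp add: row_stochastic_def)

lemma rs_mono: "row_stochastic W \<Longrightarrow> A \<subseteq> B \<Longrightarrow> (\<Sum>j\<in>A. W i j) \<le> (\<Sum>j\<in>B. W i j)"
  by (rule sum_mono2) (auto simp: rs_nonneg)

lemma rs_compl: "row_stochastic W \<Longrightarrow> (\<Sum>j\<in>-A. W i j) = 1 - (\<Sum>j\<in>A. W i j)"
proof -
  assume rs: "row_stochastic W"
  have "(\<Sum>j\<in>UNIV. W i j) = (\<Sum>j\<in>UNIV - A. W i j) + (\<Sum>j\<in>A. W i j)"
    by (rule sum.subset_diff) auto
  moreover have "(\<Sum>j\<in>UNIV. W i j) = 1" using rs by (simp add: row_stochastic_def)
  ultimately show ?thesis by (simp add: Compl_eq_Diff_UNIV)
qed

lemma med_exists_le: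
  assumes rs: "row_stochastic W" and xi: "x$i \<le> c"
    and h: "(\<Sum>j\<in>{j. x$j \<le> c}. W i j) \<ge> 1/2"
  shows "\<exists>y. is_wmedian W i x y \<and> y \<le> c"
proof -
  define V where "V = {v \<in> range (\<lambda>j. x$j). (\<Sum>j\<in>{j. x$j \<le> v}. W i j) \<ge> 1/2}"
  define v0 where "v0 = Max {v \<in> range (\<lambda>j. x$j). v \<le> c}"
  have fin: "finite {v \<in> range (\<lambda>j. x$j). v \<le> c}" by simp
  have ne: "x$i \<in> {v \<in> range (\<lambda>j. x$j). v \<le> c}" using xi by auto
  have v0m: "v0 \<in> {v \<in> range (\<lambda>j. x$j). v \<le> c}"
    using Max_in[OF fin] ne unfolding v0_def by blast
  hence v0in: "v0 \<in> range (\<lambda>j. x$j)" "v0 \<le> c" by auto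
  have "{j. x$j \<le> v0} = {j. x$j \<le> c}"
  proof
    show "{j. x$j \<le> v0} \<subseteq> {j. x$j \<le> c}" using v0in by auto
    show "{j. x$j \<le> c} \<subseteq> {j. x$j \<le> v0}"
      using Max_ge[OF fin] unfolding v0_def by auto
  qed
  hence v0V: "v0 \<in> V" using h v0in by (simp add: V_def)
  have finV: "finite V" unfolding V_def by simp
  define y where "y = Min V"
  have yV: "y \<in> V" using Min_in finV v0V unfolding y_def by auto
  have "y \<le> v0" using Min_le[OF finV v0V] unfolding y_def .
  have gt: "(\<Sum>j\<in>{j. x$j > y}. W i j) \<le> 1/2"
  proof -
    have "{j. x$j > y} = -{j. x$j \<le> y}" by auto
    thus ?thesis using rs_compl[OF rs, where A="{j. x$j \<le> y}" and i=i] yV by (simp add: V_def)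
  qed
  have lt: "(\<Sum>j\<in>{j. x$j < y}. W i j) \<le> 1/2"
  proof (rule ccontr)
    assume a: "\<not> (\<Sum>j\<in>{j. x$j < y}. W i j) \<le> 1/2"
    have ne2: "{j. x$j < y} \<noteq> {}"
    proof
      assume "{j. x$j < y} = {}"
      hence "(\<Sum>j\<in>{j. x$j < y}. W i j) = 0" by simp
      thus False using a by simp
    qed
    define y' where "y' = Max ((\<lambda>j. x$j) ` {j. x$j < y})"
    have fin2: "finite ((\<lambda>j. x$j) ` {j. x$j < y})" by simp
    have y'in: "y' \<in> (\<lambda>j. x$j) ` {j. x$j < y}" unfolding y'_def
      using Max_in[OF fin2] ne2 by auto
    have "{j. x$j \<le> y'} = {j. x$j < y}"
    proof
      show "{j. x$j \<le> y'} \<subseteq> {j. x$j < y}" using y'in by auto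
      show "{j. x$j < y} \<subseteq> {j. x$j \<le> y'}" using Max_ge[OF fin2] unfolding y'_def by auto
    qed
    hence "y' \<in> V" using a y'in by (auto simp: V_def)
    hence "y \<le> y'" using Min_le[OF finV] unfolding y_def by auto
    thus False using y'in by auto
  qed
  show ?thesis using yV gt lt \<open>y \<le> v0\<close> v0in
    by (intro exI[of _ y]) (auto simp: is_wmedian_def V_def)
qed

lemma med_convex:
  assumes rs: "row_stochastic W" and m1: "is_wmedian W i x y1" and m2: "is_wmedian W i x y2"
    and "y1 \<le> v" "v \<le> y2" "v \<in> range (\<lambda>j. x$j)"
  shows "is_wmedian W i x v"
proof -
  have "(\<Sum>j\<in>{j. x$j < v}. W i j) \<le> (\<Sum>j\<in>{j. x$j < y2}. W i j)"
    by (rule rs_mono[OF rs]) (use assms in auto)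
  moreover have "(\<Sum>j\<in>{j. x$j > v}. W i j) \<le> (\<Sum>j\<in>{j. x$j > y1}. W i j)"
    by (rule rs_mono[OF rs]) (use assms in auto)
  ultimately show ?thesis using m1 m2 assms(6) by (auto simp: is_wmedian_def)
qed

definition closest where
  "closest W i x y \<longleftrightarrow> is_wmedian W i x y \<and>
      (\<forall>z. is_wmedian W i x z \<longrightarrow> \<bar>y - x $ i\<bar> \<le> \<bar>z - x $ i\<bar>)"

lemma closest_unique:
  assumes rs: "row_stochastic W" and "closest W i x y1" "closest W i x y2"
  shows "y1 = y2"
proof (rule ccontr)
  assume ne: "y1 \<noteq> y2"
  have m1: "is_wmedian W i x y1" and m2: "is_wmedian W i x y2"
    and eq: "\<bar>y1 - x$i\<bar> = \<bar>y2 - x$i\<bar>"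
    using assms by (auto simp: closest_def intro: antisym)
  have xr: "x$i \<in> range (\<lambda>j. x$j)" by auto
  have "is_wmedian W i x (x$i)"
  proof (cases "y1 \<le> y2")
    case True
    then show ?thesis using eq ne med_convex[OF rs m1 m2 _ _ xr] by (auto simp: abs_if split: if_splits)
  next
    case False
    then show ?thesis using eq ne med_convex[OF rs m2 m1 _ _ xr] by (auto simp: abs_if split: if_splits)
  qed
  hence "\<bar>y1 - x$i\<bar> \<le> 0" using assms(2) by (auto simp: closest_def)
  hence "y1 = x$i" by auto
  thus False using eq ne by auto
qed

lemma med_exists: "row_stochastic W \<Longrightarrow> \<exists>y. is_wmedian W i x y"
proof -
  assume rs: "row_stochastic W"
  define c where "c = Max (range (\<lambda>j. x$j))"
  have le: "x$j \<le> c" for j unfolding c_def by (rule Max_ge) auto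
  hence "{j. x$j \<le> c} = UNIV" by auto
  hence "(\<Sum>j\<in>{j. x$j \<le> c}. W i j) = 1" using rs by (simp add: row_stochastic_def)
  thus ?thesis using med_exists_le[OF rs le[of i]] by auto
qed

lemma closest_exists: "row_stochastic W \<Longrightarrow> \<exists>y. closest W i x y"
proof -
  assume rs: "row_stochastic W"
  define S where "S = {y. is_wmedian W i x y}"
  have finS: "finite S" unfolding S_def
    by (rule finite_subset[of _ "range (\<lambda>j. x$j)"]) (auto simp: is_wmedian_def)
  have neS: "S \<noteq> {}" using med_exists[OF rs] unfolding S_def by auto
  define m where "m = Min ((\<lambda>y. \<bar>y - x$i\<bar>) ` S)"
  have "m \<in> (\<lambda>y. \<bar>y - x$i\<bar>) ` S" unfolding m_def using finS neS by (intro Min_in) auto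
  then obtain y where y: "y \<in> S" "m = \<bar>y - x$i\<bar>" by auto
  have "\<forall>z. is_wmedian W i x z \<longrightarrow> \<bar>y - x $ i\<bar> \<le> \<bar>z - x $ i\<bar>"
  proof (intro allI impI)
    fix z assume z: "is_wmedian W i x z"
    have "m \<le> \<bar>z - x$i\<bar>" unfolding m_def by (rule Min_le) (use finS z in \<open>auto simp: S_def\<close>)
    thus "\<bar>y - x $ i\<bar> \<le> \<bar>z - x $ i\<bar>" using y by simp
  qed
  thus ?thesis using y unfolding closest_def S_def by auto
qed

lemma Med_closest: "row_stochastic W \<Longrightarrow> closest W i x (Med W i x)"
proof -
  assume rs: "row_stochastic W"
  obtain y where y: "closest W i x y" using closest_exists[OF rs] by auto
  have "closest W i x (THE y. closest W i x y)"
    by (rule theI[of _ y]) (use y closest_unique[OF rs] in auto)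
  thus ?thesis unfolding Med_def closest_def[symmetric] .
qed

lemma Med_le:
  assumes rs: "row_stochastic W" and xi: "x$i \<le> c"
    and h: "(\<Sum>j\<in>{j. x$j \<le> c}. W i j) \<ge> 1/2"
  shows "Med W i x \<le> c"
proof (rule ccontr)
  assume a: "\<not> Med W i x \<le> c"
  obtain y where y: "is_wmedian W i x y" "y \<le> c" using med_exists_le[OF assms] by auto
  have cl: "closest W i x (Med W i x)" by (rule Med_closest[OF rs])
  show False
  proof (cases "y \<le> x$i")
    case True
    have mm: "is_wmedian W i x (Med W i x)" using cl by (simp add: closest_def)
    have "is_wmedian W i x (x$i)"
      by (rule med_convex[OF rs y(1) mm]) (use True a xi in auto)
    hence "\<bar>Med W i x - x$i\<bar> \<le> 0" using cl by (auto simp: closest_def)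
    thus False using a xi by auto
  next
    case False
    have "\<bar>Med W i x - x$i\<bar> \<le> \<bar>y - x$i\<bar>" using cl y by (auto simp: closest_def)
    thus False using False a xi y by auto
  qed
qed

lemma wmedian_neg: "is_wmedian W i (-x) y \<longleftrightarrow> is_wmedian W i x (-y)"
proof -
  have r: "y \<in> range (\<lambda>j. (-x)$j) \<longleftrightarrow> -y \<in> range (\<lambda>j. x$j)"
    by (auto simp: image_iff) (metis minus_minus)+
  have "{j. (-x)$j < y} = {j. x$j > -y}" "{j. (-x)$j > y} = {j. x$j < -y}" by auto
  thus ?thesis using r unfolding is_wmedian_def by auto
qed

lemma Med_neg: "row_stochastic W \<Longrightarrow> Med W i (-x) = - Med W i x"
proof -
  assume rs: "row_stochastic W"
  have c: "closest W i x (Med W i x)" by (rule Med_closest[OF rs])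
  have "closest W i (-x) (- Med W i x)"
    using c unfolding closest_def wmedian_neg
    by (auto simp: abs_minus_commute)
  thus ?thesis using closest_unique[OF rs Med_closest[OF rs]] by auto
qed

lemma Med_ge:
  assumes rs: "row_stochastic W" and xi: "x$i \<ge> d"
    and h: "(\<Sum>j\<in>{j. x$j \<ge> d}. W i j) \<ge> 1/2"
  shows "Med W i x \<ge> d"
proof -
  have "{j. (-x)$j \<le> -d} = {j. x$j \<ge> d}" by auto
  hence "Med W i (-x) \<le> -d" using Med_le[OF rs, of "-x" i "-d"] xi h by auto
  thus ?thesis using Med_neg[OF rs] by auto
qed

theorem mainTheorem9:
  fixes W :: "'n::finite \<Rightarrow> 'n \<Rightarrow> real" and M :: "'n set"
  assumes "row_stochastic W"
    and "maximal_cohesive W M"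
    and "M \<noteq> {}"
    and "M \<noteq> UNIV"
  defines "X0 \<equiv> {x :: real^'n.
      Max ((\<lambda>j. x $ j) ` M) < Min ((\<lambda>k. x $ k) ` (UNIV - M))
    \<or> Min ((\<lambda>j. x $ j) ` M) > Max ((\<lambda>k. x $ k) ` (UNIV - M))}"
  shows "(\<exists>X. X \<in> sets lebesgue \<and> emeasure lebesgue X > 0 \<and>
            (\<forall>x0\<in>X. \<forall>\<sigma> :: nat \<Rightarrow> 'n. \<forall>t. \<not> consensus (wm_traj W x0 \<sigma> t)))
       \<and> X0 \<in> sets lebesgue \<and> emeasure lebesgue X0 > 0
       \<and> (\<forall>x0\<in>X0. \<forall>\<sigma> :: nat \<Rightarrow> 'n. \<forall>t. \<not> consensus (wm_traj W x0 \<sigma> t))"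
proof -
  have rs: "row_stochastic W" by fact
  have coh: "(\<Sum>j\<in>M. W i j) \<ge> 1/2" if "i \<in> M" for i
    using assms(2) that by (auto simp: maximal_cohesive_def cohesive_def)
  have mx: "(\<Sum>j\<in>-M. W i j) \<ge> 1/2" if "i \<notin> M" for i
  proof -
    have "(\<Sum>j\<in>M. W i j) \<le> 1/2" using assms(2) that by (auto simp: maximal_cohesive_def not_less)
    thus ?thesis using rs_compl[OF rs, where A=M and i=i] by simp
  qed
  have wA: "(\<Sum>j\<in>A. W i j) \<ge> 1/2" if "A = M \<or> A = -M" "i \<in> A" for A i
    using that coh mx by auto
  have wB: "(\<Sum>j\<in>-A. W i j) \<ge> 1/2" if "A = M \<or> A = -M" "i \<notin> A" for A i
    using that coh mx by auto
  define Inv where "Inv x \<longleftrightarrow> (\<exists>c d A. c < d \<and> (A = M \<or> A = -M) \<and> (\<forall>j\<in>A. x$j \<le> c)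
       \<and> (\<forall>j. j \<notin> A \<longrightarrow> x$j \<ge> d))" for x :: "real^'n"
  have step: "Inv (\<chi> k. if k = i then Med W i x else x$k)" if "Inv x" for x i
  proof -
    from that obtain c d A where cd: "c < d" and A: "A = M \<or> A = -M"
      and le: "\<forall>j\<in>A. x$j \<le> c" and ge: "\<forall>j. j \<notin> A \<longrightarrow> x$j \<ge> d"
      unfolding Inv_def by blast
    have m1: "Med W i x \<le> c" if "i \<in> A"
    proof (rule Med_le[OF rs])
      show "x$i \<le> c" using le that by auto
      have "(\<Sum>j\<in>A. W i j) \<le> (\<Sum>j\<in>{j. x$j \<le> c}. W i j)"
        by (rule rs_mono[OF rs]) (use le in auto)
      thus "(\<Sum>j\<in>{j. x$j \<le> c}. W i j) \<ge> 1/2" using wA[OF A that] by linarith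
    qed
    have m2: "Med W i x \<ge> d" if "i \<notin> A"
    proof (rule Med_ge[OF rs])
      show "x$i \<ge> d" using ge that by auto
      have "(\<Sum>j\<in>-A. W i j) \<le> (\<Sum>j\<in>{j. x$j \<ge> d}. W i j)"
        by (rule rs_mono[OF rs]) (use ge in auto)
      thus "(\<Sum>j\<in>{j. x$j \<ge> d}. W i j) \<ge> 1/2" using wB[OF A that] by linarith
    qed
    show ?thesis unfolding Inv_def
      by (rule exI[of _ c], rule exI[of _ d], rule exI[of _ A]) (use cd A le ge m1 m2 in auto)
  qed
  have inv_t: "Inv (wm_traj W x0 \<sigma> t)" if "Inv x0" for x0 \<sigma> t
    by (induction t) (use that step in \<open>auto simp: Let_def\<close>)
  have nc: "\<not> consensus x" if "Inv x" for x
  proof -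
    from that obtain c d A where cd: "c < d" and A: "A = M \<or> A = -M"
      and le: "\<forall>j\<in>A. x$j \<le> c" and ge: "\<forall>j. j \<notin> A \<longrightarrow> x$j \<ge> d"
      unfolding Inv_def by blast
    obtain j k where "j \<in> A" "k \<notin> A" using A assms(3,4) by blast
    hence "x$j \<noteq> x$k" using le ge cd by force
    thus ?thesis by (auto simp: consensus_def)
  qed
  have X0inv: "Inv x" if "x \<in> X0" for x
  proof -
    have f1: "finite ((\<lambda>j. x $ j) ` M)" "finite ((\<lambda>j. x $ j) ` (UNIV - M))" by auto
    from that consider (a) "Max ((\<lambda>j. x $ j) ` M) < Min ((\<lambda>k. x $ k) ` (UNIV - M))"
      | (b) "Min ((\<lambda>j. x $ j) ` M) > Max ((\<lambda>k. x $ k) ` (UNIV - M))"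
      unfolding X0_def by blast
    thus ?thesis
    proof cases
      case a
      show ?thesis unfolding Inv_def
        apply (rule exI[of _ "Max ((\<lambda>j. x $ j) ` M)"], rule exI[of _ "Min ((\<lambda>k. x $ k) ` (UNIV - M))"], rule exI[of _ M])
        using a Max_ge[OF f1(1)] Min_le[OF f1(2)] by auto
    next
      case b
      show ?thesis unfolding Inv_def
        apply (rule exI[of _ "Max ((\<lambda>k. x $ k) ` (UNIV - M))"], rule exI[of _ "Min ((\<lambda>j. x $ j) ` M)"], rule exI[of _ "-M"])
        using b Max_ge[OF f1(2)] Min_le[OF f1(1)] by (auto simp: Compl_eq_Diff_UNIV)
    qed
  qed
  have good: "\<forall>x0\<in>X0. \<forall>\<sigma> :: nat \<Rightarrow> 'n. \<forall>t. \<not> consensus (wm_traj W x0 \<sigma> t)"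
    using X0inv inv_t nc by blast
  have borel: "X0 \<in> sets borel"
  proof -
    have "X0 = {x \<in> space borel. Max ((\<lambda>j. x $ j) ` M) < Min ((\<lambda>k. x $ k) ` (UNIV - M))
    \<or> Min ((\<lambda>j. x $ j) ` M) > Max ((\<lambda>k. x $ k) ` (UNIV - M))}" unfolding X0_def by simp
    also have "\<dots> \<in> sets borel" by measurable
    finally show ?thesis .
  qed
  hence meas: "X0 \<in> sets lebesgue" by simp
  define a :: "real^'n" where "a = (\<chi> j. if j \<in> M then 0 else 2)"
  define b :: "real^'n" where "b = (\<chi> j. if j \<in> M then 1 else 3)"
  have sub: "box a b \<subseteq> X0"
  proof
    fix x assume "x \<in> box a b"
    hence x: "a$i < x$i \<and> x$i < b$i" for i unfolding mem_box_cart by auto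
    have x1: "x$j < 1" if "j \<in> M" for j using x[of j] that by (simp add: b_def)
    have x2: "x$j > 2" if "j \<notin> M" for j using x[of j] that by (simp add: a_def)
    have "Max ((\<lambda>j. x $ j) ` M) < 1"
      using x1 assms(3) by (subst Max_less_iff) (auto simp: a_def b_def)
    moreover have "Min ((\<lambda>k. x $ k) ` (UNIV - M)) > 2"
      using x2 assms(4) by (subst Min_gr_iff) (auto simp: a_def b_def)
    ultimately show "x \<in> X0" unfolding X0_def by auto
  qed
  have ne: "box a b \<noteq> {}"
  proof -
    have "(\<chi> j. if j \<in> M then 1/2 else 5/2) \<in> box a b"
      unfolding mem_box_cart a_def b_def by auto
    thus ?thesis by blast
  qed
  hence ab: "\<forall>i\<in>Basis. a \<bullet> i < b \<bullet> i" using box_ne_empty(2) by blast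
  have "emeasure lborel (box a b) = (\<Prod>i\<in>Basis. (b - a) \<bullet> i)"
    using ab by (intro emeasure_lborel_box) auto
  moreover have "(\<Prod>i\<in>Basis. (b - a) \<bullet> i) > 0"
    using ab by (intro prod_pos) (auto simp: inner_diff_left)
  ultimately have "emeasure lborel (box a b) > 0" by simp
  hence "emeasure lebesgue (box a b) > 0" by simp
  moreover have "emeasure lebesgue (box a b) \<le> emeasure lebesgue X0"
    by (rule emeasure_mono[OF sub meas])
  ultimately have pos: "emeasure lebesgue X0 > 0" by order
  show ?thesis using meas pos good by blast
qed

end
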